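(* The identity map $\mathrm{id}_2:M_2\to M_2$ generates an exposed ray of the convex cone $\mathbb P_1[M_2,M_2]$ of all positive linear maps from $M_2$ into $M_2$.
   Context: $M_2$ denotes the algebra of $2\times 2$ complex matrices. A linear map $M_2\to M_2$ is positive if it sends positive semidefinite matrices to positive semidefinite matrices; $\mathbb P_1[M_2,M_2]$ is the convex cone of such maps, regarded in the real vector space of Hermiticity-preserving linear maps $M_2\to M_2$. A nonzero $\phi$ in the cone generates an exposed ray if there is a real linear functional $f$ on that space with $f\ge0$ on the cone and $\{\psi\in\mathbb P_1[M_2,M_2]: f(\psi)=0\}=\{\lambda\phi:\lambda\ge0\}$. *)

theory Defs
  imports "HOL-Analysis.Analysis"
begin

type_synonym M2 = "complex^2^2"

definition cscale :: "complex \<Rightarrow> M2 \<Rightarrow> M2" where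
  "cscale c A = (\<chi> i j. c * A$i$j)"

definition adjoint2 :: "M2 \<Rightarrow> M2" where
  "adjoint2 A = (\<chi> i j. cnj (A$j$i))"

definition hermitian2 :: "M2 \<Rightarrow> bool" where
  "hermitian2 A \<longleftrightarrow> adjoint2 A = A"

definition psd2 :: "M2 \<Rightarrow> bool" where
  "psd2 A \<longleftrightarrow> hermitian2 A \<and>
     (\<forall>x::complex^2. 0 \<le> Re (\<Sum>i\<in>UNIV. \<Sum>j\<in>UNIV. cnj (x$i) * A$i$j * x$j))"

definition clinear2 :: "(M2 \<Rightarrow> M2) \<Rightarrow> bool" where
  "clinear2 \<phi> \<longleftrightarrow> (\<forall>A B. \<phi> (A + B) = \<phi> A + \<phi> B) \<and> (\<forall>c A. \<phi> (cscale c A) = cscale c (\<phi> A))"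

definition HP :: "(M2 \<Rightarrow> M2) set" where
  "HP = {\<phi>. clinear2 \<phi> \<and> (\<forall>A. hermitian2 A \<longrightarrow> hermitian2 (\<phi> A))}"

definition P1 :: "(M2 \<Rightarrow> M2) set" where
  "P1 = {\<phi>\<in>HP. \<forall>A. psd2 A \<longrightarrow> psd2 (\<phi> A)}"

definition real_functional_on_HP :: "((M2 \<Rightarrow> M2) \<Rightarrow> real) \<Rightarrow> bool" where
  "real_functional_on_HP f \<longleftrightarrow>
     (\<forall>\<phi>\<in>HP. \<forall>\<psi>\<in>HP. \<forall>a b::real.
        f (\<lambda>A. a *\<^sub>R \<phi> A + b *\<^sub>R \<psi> A) = a * f \<phi> + b * f \<psi>)"

definition exposed_ray_P1 :: "(M2 \<Rightarrow> M2) \<Rightarrow> bool" where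
  "exposed_ray_P1 \<phi> \<longleftrightarrow> \<phi> \<in> P1 \<and> \<phi> \<noteq> (\<lambda>A. 0) \<and>
     (\<exists>f. real_functional_on_HP f \<and> (\<forall>\<psi>\<in>P1. 0 \<le> f \<psi>) \<and>
          {\<psi>\<in>P1. f \<psi> = 0} = {(\<lambda>A. l *\<^sub>R \<phi> A) | l::real. 0 \<le> l})"

end

theory Submission
  imports Defs
begin

definition qf :: "M2 \<Rightarrow> complex^2 \<Rightarrow> complex" where
  "qf A x = (\<Sum>i\<in>UNIV. \<Sum>j\<in>UNIV. cnj (x$i) * A$i$j * x$j)"

lemma herm_entries:
  assumes "hermitian2 P"
  shows "P$2$1 = cnj (P$1$2)" "Im (P$1$1) = 0" "Im (P$2$2) = 0"
proof -
  have h: "\<And>i j. cnj (P$j$i) = P$i$j" using assms unfolding hermitian2_def adjoint2_def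
    by (metis vec_lambda_beta)
  show "P$2$1 = cnj (P$1$2)" using h[of 2 1] by (metis complex_cnj_cnj)
  show "Im (P$1$1) = 0" using h[of 1 1] by (metis Reals_cnj_iff complex_is_Real_iff)
  show "Im (P$2$2) = 0" using h[of 2 2] by (metis Reals_cnj_iff complex_is_Real_iff)
qed

lemma qf_expand:
  assumes "hermitian2 P"
  shows "Re (qf P (\<chi> i. y$i + complex_of_real t * z$i)) =
    Re (qf P y) + 2*t*Re (\<Sum>i\<in>UNIV. cnj (z$i) * (\<Sum>j\<in>UNIV. P$i$j * y$j)) + t^2 * Re (qf P z)"
  using herm_entries[OF assms]
  by (simp add: qf_def sum_2 algebra_simps power2_eq_square)

lemma quad_zero:
  fixes b c :: real
  assumes "\<And>t. 0 \<le> t*b + t^2*c"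
  shows "b = 0"
proof (rule ccontr)
  assume nb: "b \<noteq> 0"
  have c0: "0 \<le> c" using assms[of 1] assms[of "-1"] by simp
  define s where "s = - b / (c + 1)"
  have sc: "s * (c + 1) = - b" unfolding s_def using c0 by simp
  have "s * b + s ^ 2 * c = - (s ^ 2)"
  proof -
    have "s * b + s ^ 2 * c = s * (b + s * (c + 1)) - s ^ 2" by (simp add: algebra_simps power2_eq_square)
    also have "\<dots> = - (s ^ 2)" using sc by simp
    finally show ?thesis .
  qed
  moreover have "s \<noteq> 0" using sc nb by auto
  then have "s ^ 2 > 0" by simp
  ultimately show False using assms[of s] by linarith
qed

lemma psd_zero:
  assumes "psd2 P" "Re (qf P y) = 0"
  shows "(\<Sum>j\<in>UNIV. P$i$j * y$j) = 0"
proof -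
  have h: "hermitian2 P" using assms unfolding psd2_def by simp
  have pos: "\<And>x. 0 \<le> Re (qf P x)" using assms unfolding psd2_def qf_def by simp
  have key: "Re (\<Sum>k\<in>UNIV. cnj (z$k) * (\<Sum>j\<in>UNIV. P$k$j * y$j)) = 0" for z
  proof -
    have "0 \<le> t * (2 * Re (\<Sum>k\<in>UNIV. cnj (z$k) * (\<Sum>j\<in>UNIV. P$k$j * y$j))) + t^2 * Re (qf P z)" for t
      using pos[of "\<chi> i. y$i + complex_of_real t * z$i"] qf_expand[OF h, of y t z] assms(2) by simp
    from quad_zero[OF this] show ?thesis by simp
  qed
  define w where "w = (\<Sum>j\<in>UNIV. P$i$j * y$j)"
  have "Re w = 0" using key[of "\<chi> k. if k = i then 1 else 0"]
    exhaust_2[of i] unfolding w_def by (auto simp: sum_2)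
  moreover have "Im w = 0" using key[of "\<chi> k. if k = i then - \<i> else 0"]
    exhaust_2[of i] unfolding w_def by (auto simp: sum_2)
  ultimately show ?thesis unfolding w_def by (simp add: complex_eq_iff)
qed

lemma zero_cond:
  assumes "psd2 P" "Re (qf P y) = 0"
  shows "P$1$1 * y$1 + P$1$2 * y$2 = 0" "P$2$1 * y$1 + P$2$2 * y$2 = 0"
  using psd_zero[OF assms, of 1] psd_zero[OF assms, of 2] by (simp_all add: sum_2)

definition outer :: "complex^2 \<Rightarrow> M2" where
  "outer x = (\<chi> i j. x$i * cnj (x$j))"

lemma psd_outer: "psd2 (outer x)"
proof -
  have "hermitian2 (outer x)"
    unfolding hermitian2_def adjoint2_def outer_def by (simp add: vec_eq_iff mult.commute)
  moreover have "0 \<le> Re (qf (outer x) z)" for z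
  proof -
    define w where "w = cnj (z$1) * x$1 + cnj (z$2) * x$2"
    have "qf (outer x) z = w * cnj w" unfolding qf_def outer_def w_def
      by (simp add: sum_2 algebra_simps)
    then show ?thesis by (simp add: complex_mult_cnj)
  qed
  ultimately show ?thesis unfolding psd2_def qf_def by simp
qed

lemma qf_lin: "Re (qf (a *\<^sub>R M + b *\<^sub>R N) y) = a * Re (qf M y) + b * Re (qf N y)"
  unfolding qf_def by (simp add: sum_2 algebra_simps)

definition E :: "2 \<Rightarrow> 2 \<Rightarrow> M2" where
  "E a b = (\<chi> i j. if i = a \<and> j = b then 1 else 0)"

definition v :: "complex \<Rightarrow> complex \<Rightarrow> complex^2" where
  "v a b = (\<chi> i. if i = 1 then a else b)"

definition X3 :: M2 where "X3 = E 1 1 + E 1 2 + E 2 1 + E 2 2"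
definition X4 :: M2 where "X4 = E 1 1 + cscale (-1) (E 1 2) + cscale (-1) (E 2 1) + E 2 2"
definition X5 :: M2 where "X5 = E 1 1 + cscale (- \<i>) (E 1 2) + cscale \<i> (E 2 1) + E 2 2"
definition X6 :: M2 where "X6 = E 1 1 + cscale \<i> (E 1 2) + cscale (- \<i>) (E 2 1) + E 2 2"

lemma X_outer:
  "E 1 1 = outer (v 1 0)" "E 2 2 = outer (v 0 1)" "X3 = outer (v 1 1)"
  "X4 = outer (v 1 (-1))" "X5 = outer (v 1 \<i>)" "X6 = outer (v 1 (- \<i>))"
  unfolding X3_def X4_def X5_def X6_def E_def outer_def v_def cscale_def
  by (simp_all add: vec_eq_iff forall_2)

definition fw :: "(M2 \<Rightarrow> M2) \<Rightarrow> real" where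
  "fw \<psi> = Re (qf (\<psi> (E 1 1)) (v 0 1)) + Re (qf (\<psi> (E 2 2)) (v 1 0))
     + Re (qf (\<psi> X3) (v 1 (-1))) + Re (qf (\<psi> X4) (v 1 1))
     + Re (qf (\<psi> X5) (v 1 (- \<i>))) + Re (qf (\<psi> X6) (v 1 \<i>))"

lemma fw_id_terms:
  "qf (E 1 1) (v 0 1) = 0" "qf (E 2 2) (v 1 0) = 0" "qf X3 (v 1 (-1)) = 0"
  "qf X4 (v 1 1) = 0" "qf X5 (v 1 (- \<i>)) = 0" "qf X6 (v 1 \<i>) = 0"
  unfolding X3_def X4_def X5_def X6_def E_def qf_def v_def cscale_def
  by (simp_all add: sum_2)

lemma decomp: "A = cscale (A$1$1) (E 1 1) + cscale (A$1$2) (E 1 2) + cscale (A$2$1) (E 2 1) + cscale (A$2$2) (E 2 2)"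
  unfolding E_def cscale_def by (simp add: vec_eq_iff forall_2)

lemma main_dir:
  assumes P: "\<psi> \<in> P1" and z: "fw \<psi> = 0"
  shows "\<exists>l::real. 0 \<le> l \<and> \<psi> = (\<lambda>A. l *\<^sub>R A)"
proof -
  have add: "\<And>A B. \<psi> (A + B) = \<psi> A + \<psi> B" and sc: "\<And>c A. \<psi> (cscale c A) = cscale c (\<psi> A)"
    using P unfolding P1_def HP_def clinear2_def by auto
  have pp: "\<And>A. psd2 A \<Longrightarrow> psd2 (\<psi> A)" using P unfolding P1_def by auto
  have nn: "\<And>A y. psd2 A \<Longrightarrow> 0 \<le> Re (qf (\<psi> A) y)"
    using pp unfolding psd2_def qf_def by blast
  have po: "psd2 (E 1 1)" "psd2 (E 2 2)" "psd2 X3" "psd2 X4" "psd2 X5" "psd2 X6"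
    by (simp_all only: X_outer psd_outer)
  have t1: "Re (qf (\<psi> (E 1 1)) (v 0 1)) = 0" and t2: "Re (qf (\<psi> (E 2 2)) (v 1 0)) = 0"
   and t3: "Re (qf (\<psi> X3) (v 1 (-1))) = 0" and t4: "Re (qf (\<psi> X4) (v 1 1)) = 0"
   and t5: "Re (qf (\<psi> X5) (v 1 (- \<i>))) = 0" and t6: "Re (qf (\<psi> X6) (v 1 \<i>)) = 0"
    using z nn[OF po(1), of "v 0 1"] nn[OF po(2), of "v 1 0"] nn[OF po(3), of "v 1 (-1)"]
      nn[OF po(4), of "v 1 1"] nn[OF po(5), of "v 1 (- \<i>)"] nn[OF po(6), of "v 1 \<i>"]
    unfolding fw_def by linarith+
  note c1 = zero_cond[OF pp[OF po(1)] t1] and c2 = zero_cond[OF pp[OF po(2)] t2]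
   and c3 = zero_cond[OF pp[OF po(3)] t3] and c4 = zero_cond[OF pp[OF po(4)] t4]
   and c5 = zero_cond[OF pp[OF po(5)] t5] and c6 = zero_cond[OF pp[OF po(6)] t6]
  have hh: "\<And>A. psd2 A \<Longrightarrow> hermitian2 (\<psi> A)" using pp unfolding psd2_def by blast
  note h1 = herm_entries[OF hh[OF po(1)]] and h2 = herm_entries[OF hh[OF po(2)]]
   and h3 = herm_entries[OF hh[OF po(3)]] and h5 = herm_entries[OF hh[OF po(5)]]
  have ex: "\<psi> X3 = \<psi> (E 1 1) + \<psi> (E 1 2) + \<psi> (E 2 1) + \<psi> (E 2 2)"
    "\<psi> X4 = \<psi> (E 1 1) + cscale (-1) (\<psi> (E 1 2)) + cscale (-1) (\<psi> (E 2 1)) + \<psi> (E 2 2)"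
    "\<psi> X5 = \<psi> (E 1 1) + cscale (- \<i>) (\<psi> (E 1 2)) + cscale \<i> (\<psi> (E 2 1)) + \<psi> (E 2 2)"
    "\<psi> X6 = \<psi> (E 1 1) + cscale \<i> (\<psi> (E 1 2)) + cscale (- \<i>) (\<psi> (E 2 1)) + \<psi> (E 2 2)"
    unfolding X3_def X4_def X5_def X6_def by (simp_all only: add sc)
  define l where "l = Re (\<psi> (E 1 1) $ 1 $ 1)"
  have eqs: "\<psi> (E a b) = l *\<^sub>R E a b" for a b
  proof -
    note all = c1 c2 c3 c4 c5 c6 h1 h2 h3 h5
    have T: "\<psi> (E 1 1) = l *\<^sub>R E 1 1 \<and> \<psi> (E 1 2) = l *\<^sub>R E 1 2 \<and>
              \<psi> (E 2 1) = l *\<^sub>R E 2 1 \<and> \<psi> (E 2 2) = l *\<^sub>R E 2 2"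
      using all unfolding ex l_def
      by (simp add: v_def cscale_def complex_eq_iff vec_eq_iff forall_2 E_def)
    show ?thesis using T exhaust_2[of a] exhaust_2[of b] by auto
  qed
  have l0: "0 \<le> l"
    using nn[OF po(1), of "v 1 0"] unfolding l_def qf_def v_def by (simp add: sum_2)
  have "\<psi> A = l *\<^sub>R A" for A
  proof -
    have "\<psi> A = cscale (A$1$1) (l *\<^sub>R E 1 1) + cscale (A$1$2) (l *\<^sub>R E 1 2)
       + cscale (A$2$1) (l *\<^sub>R E 2 1) + cscale (A$2$2) (l *\<^sub>R E 2 2)"
      by (subst decomp[of A]) (simp only: add sc eqs)
    also have "\<dots> = l *\<^sub>R A"
      by (subst (5) decomp[of A]) (simp add: cscale_def E_def vec_eq_iff forall_2)
    finally show ?thesis .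
  qed
  then show ?thesis using l0 by blast
qed

lemma qf_scale: "Re (qf (l *\<^sub>R M) y) = l * Re (qf M y)"
  using qf_lin[of l M 0 M y] by simp

lemma scale_P1:
  assumes "0 \<le> l"
  shows "(\<lambda>A::M2. l *\<^sub>R A) \<in> P1"
proof -
  have lin: "clinear2 (\<lambda>A::M2. l *\<^sub>R A)"
    unfolding clinear2_def cscale_def by (simp add: vec_eq_iff scaleR_add_right algebra_simps scaleR_conv_of_real)
  have adj: "adjoint2 (l *\<^sub>R A) = l *\<^sub>R adjoint2 A" for A
    unfolding adjoint2_def by (simp add: vec_eq_iff)
  have herm: "hermitian2 A \<Longrightarrow> hermitian2 (l *\<^sub>R A)" for A
    unfolding hermitian2_def using adj by simp
  have psd: "psd2 A \<Longrightarrow> psd2 (l *\<^sub>R A)" for A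
    using herm qf_scale[of l A] assms unfolding psd2_def qf_def by simp
  show ?thesis unfolding P1_def HP_def using lin herm psd by simp
qed

theorem proposition3p3:
  shows "exposed_ray_P1 (\<lambda>A::M2. A)"
  unfolding exposed_ray_P1_def
proof (intro conjI exI[of _ fw])
  show idP: "(\<lambda>A::M2. A) \<in> P1" using scale_P1[of 1] by simp
  show "(\<lambda>A::M2. A) \<noteq> (\<lambda>A. 0)"
  proof
    assume "(\<lambda>A::M2. A) = (\<lambda>A. 0)"
    then have "E 1 1 = 0" by metis
    then show False unfolding E_def by (simp add: vec_eq_iff forall_2)
  qed
  show "real_functional_on_HP fw"
    unfolding real_functional_on_HP_def fw_def by (simp add: qf_lin algebra_simps)
  have po: "psd2 (E 1 1)" "psd2 (E 2 2)" "psd2 X3" "psd2 X4" "psd2 X5" "psd2 X6"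
    by (simp_all only: X_outer psd_outer)
  show "\<forall>\<psi>\<in>P1. 0 \<le> fw \<psi>"
  proof
    fix \<psi> assume "\<psi> \<in> P1"
    then have nn: "\<And>A y. psd2 A \<Longrightarrow> 0 \<le> Re (qf (\<psi> A) y)"
      unfolding P1_def psd2_def qf_def by blast
    show "0 \<le> fw \<psi>" unfolding fw_def using nn[OF po(1)] nn[OF po(2)] nn[OF po(3)]
      nn[OF po(4)] nn[OF po(5)] nn[OF po(6)] by (meson add_nonneg_nonneg)
  qed
  show "{\<psi> \<in> P1. fw \<psi> = 0} = {(\<lambda>A. l *\<^sub>R (\<lambda>A::M2. A) A) |l. 0 \<le> l}"
  proof (intro set_eqI iffI)
    fix \<psi> assume "\<psi> \<in> {\<psi> \<in> P1. fw \<psi> = 0}"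
    then obtain l where "0 \<le> l" "\<psi> = (\<lambda>A. l *\<^sub>R A)" using main_dir by blast
    then show "\<psi> \<in> {(\<lambda>A. l *\<^sub>R (\<lambda>A::M2. A) A) |l. 0 \<le> l}" by blast
  next
    fix \<psi> assume "\<psi> \<in> {(\<lambda>A. l *\<^sub>R (\<lambda>A::M2. A) A) |l. 0 \<le> l}"
    then obtain l where l: "0 \<le> l" "\<psi> = (\<lambda>A. l *\<^sub>R A)" by blast
    have "fw \<psi> = 0" unfolding l(2) fw_def qf_scale by (simp add: fw_id_terms)
    then show "\<psi> \<in> {\<psi> \<in> P1. fw \<psi> = 0}" using scale_P1[OF l(1)] l(2) by simp
  qed
qed

end
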